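(* Fix integers $k_1,k_2$ with $-1\le k_1\le k_2$ and an integer $m\ge 2k_1+2$. For $(x_1,\ldots,x_{m-1})\in\mathbb{Z}_{\ge0}^{m-1}$ let $\overline{x}=(x_1,\ldots,x_{2k_1+1})$. There is a bijection between the set of numerical semigroups $S$ with $m(S)=m$, $g(S)=m+k_1$ and $e(S)=g(S)-k_2$, and the set of sequences $(x_1,\ldots,x_{m-1})$ satisfying: (1) $x_1,\ldots,x_{m-1}\in\{1,2,3\}$; (2) if $i\ge 2k_1$, then $x_i\in\{1,2\}$; (3) whenever $i_1,i_2,i_3\in[1,2k_1+1]$ satisfy $i_1+i_2=i_3$, we have $(x_{i_1},x_{i_2},x_{i_3})\neq(1,1,3)$; (4) $\#\{i\in[2k_1+2,m-1]\mid x_i=2\}=k_1+1-a(\overline{x})-2b(\overline{x})$; (5) $a(\overline{x})+b(\overline{x})-c(\overline{x})=2k_1+1-k_2$.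
   Context: A numerical semigroup $S$ is a submonoid of $\mathbb{N}_0$ with finite complement; $g(S)$ is the size of the complement (genus), $m(S)$ the smallest nonzero element (multiplicity), and $e(S)$ the size of the minimal generating set $(S\setminus\{0\})\setminus((S\setminus\{0\})+(S\setminus\{0\}))$ (embedding dimension). For a tuple $\overline{x}=(x_1,\ldots,x_t)\in\{1,2,3\}^t$ define $a(\overline{x})=\#\{i\in[1,t]: x_i=2\}$, $b(\overline{x})=\#\{i\in[1,t]: x_i=3\}$, and $c(\overline{x})=\#\{i\in[1,t]: \exists j_1,j_2\in[1,t] \text{ with } j_1+j_2=i \text{ and } (x_{j_1},x_{j_2},x_i)=(1,1,2)\}$. *)

theory Defs
  imports Main
begin

definition numerical_semigroup :: "nat set \<Rightarrow> bool" where
  "numerical_semigroup S \<longleftrightarrow> 0 \<in> S \<and> (\<forall>x\<in>S. \<forall>y\<in>S. x + y \<in> S) \<and> finite (UNIV - S)"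

definition multiplicity :: "nat set \<Rightarrow> nat" where
  "multiplicity S = (LEAST x. x \<in> S \<and> x \<noteq> 0)"

definition genus :: "nat set \<Rightarrow> nat" where
  "genus S = card (UNIV - S)"

definition min_generators :: "nat set \<Rightarrow> nat set" where
  "min_generators S = (S - {0}) - {x + y | x y. x \<in> S - {0} \<and> y \<in> S - {0}}"

definition embedding_dimension :: "nat set \<Rightarrow> nat" where
  "embedding_dimension S = card (min_generators S)"

text \<open>Tuples (x_1,...,x_t) are lists xs with x_i = xs ! (i - 1).\<close>
definition cnt_a :: "nat list \<Rightarrow> nat" where
  "cnt_a xs = card {i \<in> {1..length xs}. xs ! (i - 1) = 2}"

definition cnt_b :: "nat list \<Rightarrow> nat" where
  "cnt_b xs = card {i \<in> {1..length xs}. xs ! (i - 1) = 3}"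

definition cnt_c :: "nat list \<Rightarrow> nat" where
  "cnt_c xs = card {i \<in> {1..length xs}. \<exists>j1\<in>{1..length xs}. \<exists>j2\<in>{1..length xs}.
      j1 + j2 = i \<and> xs ! (j1 - 1) = 1 \<and> xs ! (j2 - 1) = 1 \<and> xs ! (i - 1) = 2}"

definition good_seq :: "int \<Rightarrow> int \<Rightarrow> int \<Rightarrow> nat list \<Rightarrow> bool" where
  "good_seq k1 k2 m xs \<longleftrightarrow>
     int (length xs) = m - 1 \<and>
     (\<forall>i\<in>{1..length xs}. xs ! (i - 1) \<in> {1, 2, 3}) \<and>
     (\<forall>i\<in>{1..length xs}. int i \<ge> 2 * k1 \<longrightarrow> xs ! (i - 1) \<in> {1, 2}) \<and>
     (\<forall>i1\<in>{1..length xs}. \<forall>i2\<in>{1..length xs}. \<forall>i3\<in>{1..length xs}.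
        int i1 \<le> 2 * k1 + 1 \<and> int i2 \<le> 2 * k1 + 1 \<and> int i3 \<le> 2 * k1 + 1 \<and> i1 + i2 = i3
        \<longrightarrow> (xs ! (i1 - 1), xs ! (i2 - 1), xs ! (i3 - 1)) \<noteq> (1, 1, 3)) \<and>
     (let xbar = take (nat (2 * k1 + 1)) xs in
        int (card {i \<in> {1..length xs}. 2 * k1 + 2 \<le> int i \<and> int i \<le> m - 1 \<and> xs ! (i - 1) = 2})
          = k1 + 1 - int (cnt_a xbar) - 2 * int (cnt_b xbar) \<and>
        int (cnt_a xbar) + int (cnt_b xbar) - int (cnt_c xbar) = 2 * k1 + 1 - k2)"

end

theory Submission
  imports Defs
begin

lemma sum_split3:
  fixes y :: "nat \<Rightarrow> nat"
  assumes "1 \<le> r" "r < M"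
  shows "sum y {1..<M} = sum y {1..<r} + y r + sum y {r<..<M}"
proof -
  have "sum y {1..<M} = sum y {1..<r} + sum y {r..<M}"
    using sum.atLeastLessThan_concat[of 1 r M y] assms by simp
  moreover have "{r..<M} = insert r {r<..<M}" using assms by auto
  ultimately show ?thesis by simp
qed

lemma inner_bound:
  fixes y :: "nat \<Rightarrow> nat"
  assumes "\<forall>j\<in>{1..<r}. 1 \<le> y j + y (r - j)"
  shows "r - 1 \<le> 2 * sum y {1..<r}"
proof -
  have e: "sum y {1..<r} = sum (\<lambda>j. y (r - j)) {1..<r}"
    by (rule sum.reindex_bij_witness[where i="\<lambda>j. r - j" and j="\<lambda>j. r - j"]) auto
  have "r - 1 = sum (\<lambda>_. 1::nat) {1..<r}" by simp
  also have "\<dots> \<le> sum (\<lambda>j. y j + y (r - j)) {1..<r}" using assms by (intro sum_mono) auto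
  also have "\<dots> = 2 * sum y {1..<r}" using e by (simp add: sum.distrib)
  finally show ?thesis .
qed

lemma wrap_bound:
  fixes y :: "nat \<Rightarrow> nat"
  assumes "\<forall>j\<in>{r<..<M}. 1 \<le> y j + y (M + r - j)"
  shows "M - 1 - r \<le> 2 * sum y {r<..<M}"
proof -
  have e: "sum y {r<..<M} = sum (\<lambda>j. y (M + r - j)) {r<..<M}"
    by (rule sum.reindex_bij_witness[where i="\<lambda>j. M + r - j" and j="\<lambda>j. M + r - j"]) auto
  have "M - 1 - r = sum (\<lambda>_. 1::nat) {r<..<M}" by simp
  also have "\<dots> \<le> sum (\<lambda>j. y j + y (M + r - j)) {r<..<M}" using assms by (intro sum_mono) auto
  also have "\<dots> = 2 * sum y {r<..<M}" using e by (simp add: sum.distrib)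
  finally show ?thesis .
qed

definition Dc :: "nat \<Rightarrow> (nat \<Rightarrow> nat) \<Rightarrow> nat \<Rightarrow> bool" where
  "Dc M K r \<longleftrightarrow> (\<exists>j\<in>{1..<M}. \<exists>l\<in>{1..<M}. (j + l = r \<and> K j + K l \<le> K r) \<or> (j + l = M + r \<and> K j + K l + 1 \<le> K r))"

definition kunz :: "nat \<Rightarrow> (nat \<Rightarrow> nat) \<Rightarrow> bool" where
  "kunz M K \<longleftrightarrow> (\<forall>r\<in>{1..<M}. 1 \<le> K r) \<and>
     (\<forall>i\<in>{1..<M}. \<forall>j\<in>{1..<M}. i + j < M \<longrightarrow> K (i + j) \<le> K i + K j) \<and>
     (\<forall>i\<in>{1..<M}. \<forall>j\<in>{1..<M}. M < i + j \<longrightarrow> K (i + j - M) \<le> K i + K j + 1)"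

locale kz =
  fixes M n :: nat and K :: "nat \<Rightarrow> nat"
  assumes kunz: "kunz M K"
    and sumK: "(\<Sum>r\<in>{1..<M}. K r - 1) = n"
    and Mge: "2 * n \<le> M"
begin

lemma Kpos: "r \<in> {1..<M} \<Longrightarrow> 1 \<le> K r" using kunz unfolding kunz_def by auto
lemma K1: "i \<in> {1..<M} \<Longrightarrow> j \<in> {1..<M} \<Longrightarrow> i + j < M \<Longrightarrow> K (i + j) \<le> K i + K j"
  using kunz unfolding kunz_def by auto
lemma K2: "i \<in> {1..<M} \<Longrightarrow> j \<in> {1..<M} \<Longrightarrow> M < i + j \<Longrightarrow> K (i + j - M) \<le> K i + K j + 1"
  using kunz unfolding kunz_def by auto

abbreviation "y \<equiv> \<lambda>r. K r - 1"

lemma splitr: "r \<in> {1..<M} \<Longrightarrow> n = sum y {1..<r} + y r + sum y {r<..<M}"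
  using sum_split3[of r M y] sumK by auto

lemma Kle3: assumes r: "r \<in> {1..<M}" shows "K r \<le> 3"
proof (rule ccontr)
  assume "\<not> K r \<le> 3"
  have "\<forall>j\<in>{1..<r}. 1 \<le> y j + y (r - j)"
  proof
    fix j assume j: "j \<in> {1..<r}"
    have "K r \<le> K j + K (r - j)" using K1[of j "r - j"] j r by auto
    then show "1 \<le> y j + y (r - j)" using \<open>\<not> K r \<le> 3\<close> by linarith
  qed
  from inner_bound[OF this] have a: "r - 1 \<le> 2 * sum y {1..<r}" .
  have "\<forall>j\<in>{r<..<M}. 1 \<le> y j + y (M + r - j)"
  proof
    fix j assume j: "j \<in> {r<..<M}"
    have "K (j + (M + r - j) - M) \<le> K j + K (M + r - j) + 1" using K2[of j "M + r - j"] j r by auto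
    then have "K r \<le> K j + K (M + r - j) + 1" using j by simp
    then show "1 \<le> y j + y (M + r - j)" using \<open>\<not> K r \<le> 3\<close> by linarith
  qed
  from wrap_bound[OF this] have b: "M - 1 - r \<le> 2 * sum y {r<..<M}" .
  have "n = sum y {1..<r} + y r + sum y {r<..<M}" using splitr r .
  then show False using a b Mge r \<open>\<not> K r \<le> 3\<close> by linarith
qed

lemma K3_small: assumes r: "r \<in> {1..<M}" and k: "K r = 3" shows "r + 2 < 2 * n"
proof (rule ccontr)
  assume nr: "\<not> r + 2 < 2 * n"
  have "\<forall>j\<in>{1..<r}. 1 \<le> y j + y (r - j)"
  proof
    fix j assume j: "j \<in> {1..<r}"
    have "K r \<le> K j + K (r - j)" using K1[of j "r - j"] j r by auto
    then show "1 \<le> y j + y (r - j)" using k by linarith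
  qed
  from inner_bound[OF this] have a: "r - 1 \<le> 2 * sum y {1..<r}" .
  have "n = sum y {1..<r} + y r + sum y {r<..<M}" using splitr r .
  then show False using a nr k by linarith
qed

lemma K3_D: assumes r: "r \<in> {1..<M}" and k: "K r = 3" shows "Dc M K r"
proof (rule ccontr)
  assume nd: "\<not> Dc M K r"
  have "\<forall>j\<in>{1..<r}. 1 \<le> y j + y (r - j)"
  proof
    fix j assume j: "j \<in> {1..<r}"
    have "\<not> K j + K (r - j) \<le> K r" proof -
      have "j \<in> {1..<M}" "r - j \<in> {1..<M}" "j + (r - j) = r" using j r by auto
      then show ?thesis using nd unfolding Dc_def by blast
    qed
    then show "1 \<le> y j + y (r - j)" using k by linarith
  qed
  from inner_bound[OF this] have a: "r - 1 \<le> 2 * sum y {1..<r}" .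
  have "\<forall>j\<in>{r<..<M}. 1 \<le> y j + y (M + r - j)"
  proof
    fix j assume j: "j \<in> {r<..<M}"
    have "j \<in> {1..<M}" "M + r - j \<in> {1..<M}" "j + (M + r - j) = M + r" using j r by auto
    then have "\<not> K j + K (M + r - j) + 1 \<le> K r" using nd unfolding Dc_def by blast
    then show "1 \<le> y j + y (M + r - j)" using k by linarith
  qed
  from wrap_bound[OF this] have b: "M - 1 - r \<le> 2 * sum y {r<..<M}" .
  have "n = sum y {1..<r} + y r + sum y {r<..<M}" using splitr r .
  then show False using a b Mge r k by linarith
qed

lemma K2_big: assumes r: "r \<in> {1..<M}" and k: "K r = 2" and big: "2 * n \<le> r"
  shows "\<exists>j\<in>{1..<r}. K j = 1 \<and> K (r - j) = 1"
proof (rule ccontr)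
  assume nd: "\<not> ?thesis"
  have "\<forall>j\<in>{1..<r}. 1 \<le> y j + y (r - j)"
  proof
    fix j assume j: "j \<in> {1..<r}"
    have "1 \<le> K j" "1 \<le> K (r - j)" proof -
      have "r - j \<in> {1..<M}" "j \<in> {1..<M}" using j r by auto
      then show "1 \<le> K j" "1 \<le> K (r - j)" using Kpos by auto
    qed
    then show "1 \<le> y j + y (r - j)" using nd j by force
  qed
  from inner_bound[OF this] have a: "r - 1 \<le> 2 * sum y {1..<r}" .
  have "n = sum y {1..<r} + y r + sum y {r<..<M}" using splitr r .
  then show False using a big k by linarith
qed

lemma D2_iff: assumes r: "r \<in> {1..<M}" and k: "K r = 2"
  shows "Dc M K r \<longleftrightarrow> (\<exists>j\<in>{1..<M}. \<exists>l\<in>{1..<M}. j + l = r \<and> K j = 1 \<and> K l = 1)"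
proof
  assume "Dc M K r"
  then obtain j l where jl: "j\<in>{1..<M}" "l\<in>{1..<M}" and
    c: "(j + l = r \<and> K j + K l \<le> K r) \<or> (j + l = M + r \<and> K j + K l + 1 \<le> K r)"
    unfolding Dc_def by blast
  have "1 \<le> K j" "1 \<le> K l" using Kpos jl by auto
  then show "\<exists>j\<in>{1..<M}. \<exists>l\<in>{1..<M}. j + l = r \<and> K j = 1 \<and> K l = 1"
    using c k jl by (intro bexI[of _ j] bexI[of _ l]) auto
next
  assume "\<exists>j\<in>{1..<M}. \<exists>l\<in>{1..<M}. j + l = r \<and> K j = 1 \<and> K l = 1"
  then show "Dc M K r" unfolding Dc_def using k by fastforce
qed

lemma D1: assumes r: "r \<in> {1..<M}" and k: "K r = 1" shows "\<not> Dc M K r"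
proof
  assume "Dc M K r"
  then obtain j l where jl: "j\<in>{1..<M}" "l\<in>{1..<M}" and
    c: "(j + l = r \<and> K j + K l \<le> K r) \<or> (j + l = M + r \<and> K j + K l + 1 \<le> K r)"
    unfolding Dc_def by blast
  have "1 \<le> K j" "1 \<le> K l" using Kpos jl by auto
  then show False using c k by auto
qed

end

definition kset :: "nat \<Rightarrow> (nat \<Rightarrow> nat) \<Rightarrow> nat set" where
  "kset M K = {x. x mod M = 0 \<or> K (x mod M) \<le> x div M}"

lemma dm_div: "b < (M::nat) \<Longrightarrow> (a * M + b) div M = a" by simp
lemma dm_mod: "b < (M::nat) \<Longrightarrow> (a * M + b) mod M = b" by simp

lemma dm_uniq: assumes "a * M + b = c * M + (d::nat)" "b < M" "d < M" shows "a = c" "b = d"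
  using dm_div[OF assms(2), of a] dm_div[OF assms(3), of c] dm_mod[OF assms(2), of a] dm_mod[OF assms(3), of c] assms(1)
  by metis+

lemma kset_cong: "1 \<le> M \<Longrightarrow> (\<And>r. r \<in> {1..<M} \<Longrightarrow> K r = K' r) \<Longrightarrow> kset M K = kset M K'"
proof -
  assume M: "1 \<le> M" and h: "\<And>r. r \<in> {1..<M} \<Longrightarrow> K r = K' r"
  have e: "x mod M \<noteq> 0 \<Longrightarrow> K (x mod M) = K' (x mod M)" for x
    using h[of "x mod M"] M by auto
  show ?thesis
  proof (rule set_eqI)
    fix x show "x \<in> kset M K \<longleftrightarrow> x \<in> kset M K'"
      using e[of x] by (cases "x mod M = 0") (auto simp: kset_def)
  qed
qed

lemma w_in: "r < M \<Longrightarrow> K r \<le> q \<Longrightarrow> q * M + r \<in> kset M K"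
  unfolding kset_def by auto

lemma kset_ge:
  assumes M: "1 \<le> M" and Kp: "\<forall>r\<in>{1..<M}. 1 \<le> K r" and x: "x \<in> kset M K" "x \<noteq> 0"
  shows "M \<le> x"
proof (rule ccontr)
  assume "\<not> M \<le> x"
  then have "x mod M = x" "x div M = 0" by auto
  moreover have "x \<in> {1..<M}" using x \<open>\<not> M \<le> x\<close> by auto
  ultimately have "1 \<le> K x" using Kp by blast
  moreover have "K x \<le> 0" using x(1) \<open>x mod M = x\<close> \<open>x div M = 0\<close> \<open>x \<noteq> 0\<close> unfolding kset_def by auto
  ultimately show False by simp
qed

lemma kset_mult: "M \<in> kset M K" "0 \<in> kset M K" "q * M \<in> kset M K"
  unfolding kset_def by auto

lemma kset_multiplicity:
  assumes M: "1 \<le> M" and Kp: "\<forall>r\<in>{1..<M}. 1 \<le> K r"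
  shows "multiplicity (kset M K) = M"
  unfolding multiplicity_def
  by (rule Least_equality) (use M kset_mult kset_ge[OF M Kp] in auto)

lemma kset_complement:
  assumes M: "1 \<le> M"
  shows "UNIV - kset M K = (\<lambda>(r, q). q * M + r) ` (SIGMA r:{1..<M}. {..<K r})"
proof (intro set_eqI iffI)
  fix x assume "x \<in> UNIV - kset M K"
  then have h: "x mod M \<noteq> 0" "x div M < K (x mod M)" unfolding kset_def by auto
  have "x = (\<lambda>(r, q). q * M + r) (x mod M, x div M)" by simp
  moreover have "(x mod M, x div M) \<in> (SIGMA r:{1..<M}. {..<K r})" using h M by auto
  ultimately show "x \<in> (\<lambda>(r, q). q * M + r) ` (SIGMA r:{1..<M}. {..<K r})" by blast
next
  fix x assume "x \<in> (\<lambda>(r, q). q * M + r) ` (SIGMA r:{1..<M}. {..<K r})"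
  then obtain r q where rq: "r \<in> {1..<M}" "q < K r" "x = q * M + r" by auto
  then have "x mod M = r" "x div M = q" by auto
  then show "x \<in> UNIV - kset M K" using rq unfolding kset_def by auto
qed

lemma kset_genus:
  assumes M: "1 \<le> M"
  shows "genus (kset M K) = sum K {1..<M}" "finite (UNIV - kset M K)"
proof -
  have inj: "inj_on (\<lambda>(r, q). q * M + r) (SIGMA r:{1..<M}. {..<K r})"
  proof (rule inj_onI)
    fix a b assume "a \<in> (SIGMA r:{1..<M}. {..<K r})" "b \<in> (SIGMA r:{1..<M}. {..<K r})"
      "(\<lambda>(r, q). q * M + r) a = (\<lambda>(r, q). q * M + r) b"
    then show "a = b" using dm_uniq[of "snd a" M "fst a" "snd b" "fst b"] by (auto simp: case_prod_beta)
  qed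
  have "genus (kset M K) = card (SIGMA r:{1..<M}. {..<K r})"
    unfolding genus_def kset_complement[OF M] using card_image[OF inj] by simp
  also have "\<dots> = sum K {1..<M}" by (simp add: card_SigmaI)
  finally show "genus (kset M K) = sum K {1..<M}" .
  show "finite (UNIV - kset M K)" unfolding kset_complement[OF M] by auto
qed

lemma kset_semigroup_iff:
  assumes M: "1 \<le> M" and Kp: "\<forall>r\<in>{1..<M}. 1 \<le> K r"
  shows "numerical_semigroup (kset M K) \<longleftrightarrow> kunz M K"
proof
  assume ns: "numerical_semigroup (kset M K)"
  then have cl: "\<And>x y. x \<in> kset M K \<Longrightarrow> y \<in> kset M K \<Longrightarrow> x + y \<in> kset M K"
    unfolding numerical_semigroup_def by blast
  have k1: "K (i + j) \<le> K i + K j" if "i \<in> {1..<M}" "j \<in> {1..<M}" "i + j < M" for i j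
  proof -
    have "K i * M + i + (K j * M + j) \<in> kset M K" using cl w_in that by auto
    moreover have "K i * M + i + (K j * M + j) = (K i + K j) * M + (i + j)" by (simp add: algebra_simps)
    ultimately have "(K i + K j) * M + (i + j) \<in> kset M K" by simp
    then show ?thesis using that unfolding kset_def by auto
  qed
  have k2: "K (i + j - M) \<le> K i + K j + 1" if "i \<in> {1..<M}" "j \<in> {1..<M}" "M < i + j" for i j
  proof -
    have "K i * M + i + (K j * M + j) \<in> kset M K" using cl w_in that by auto
    moreover have "K i * M + i + (K j * M + j) = (K i + K j + 1) * M + (i + j - M)" using that by (simp add: algebra_simps)
    ultimately have z: "(K i + K j + 1) * M + (i + j - M) \<in> kset M K" by simp
    have lt: "i + j - M < M" "i + j - M \<noteq> 0" using that by auto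
    have "((K i + K j + 1) * M + (i + j - M)) mod M = i + j - M"
      "((K i + K j + 1) * M + (i + j - M)) div M = K i + K j + 1"
      using dm_mod[OF lt(1)] dm_div[OF lt(1)] by blast+
    then show ?thesis using z lt unfolding kset_def by auto
  qed
  show "kunz M K" unfolding kunz_def using Kp k1 k2 by blast
next
  assume kz: "kunz M K"
  have cl: "x + y \<in> kset M K" if x: "x \<in> kset M K" and y: "y \<in> kset M K" for x y
  proof -
    define a b xd yd where "a = x mod M" "b = y mod M" "xd = x div M" "yd = y div M"
    have xe: "x = xd * M + a" and ye: "y = yd * M + b" unfolding a_b_xd_yd_def by simp_all
    have ab: "a < M" "b < M" unfolding a_b_xd_yd_def using M by auto
    have xk: "a = 0 \<or> K a \<le> xd" and yk: "b = 0 \<or> K b \<le> yd" using x y unfolding kset_def a_b_xd_yd_def by auto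
    show ?thesis
    proof (cases "a = 0 \<or> b = 0")
      case True
      then show ?thesis
      proof
        assume "a = 0"
        then have "x + y = (xd + yd) * M + b" using xe ye by (simp add: algebra_simps)
        then show ?thesis using yk ab unfolding kset_def by auto
      next
        assume "b = 0"
        then have "x + y = (xd + yd) * M + a" using xe ye by (simp add: algebra_simps)
        then show ?thesis using xk ab unfolding kset_def by auto
      qed
    next
      case False
      then have a1: "a \<in> {1..<M}" "b \<in> {1..<M}" "K a \<le> xd" "K b \<le> yd" using ab xk yk by auto
      consider "a + b < M" | "a + b = M" | "M < a + b" by linarith
      then show ?thesis
      proof cases
        case 1
        have "x + y = (xd + yd) * M + (a + b)" using xe ye by (simp add: algebra_simps)
        moreover have "K (a + b) \<le> K a + K b" using kz a1 1 unfolding kunz_def by blast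
        ultimately show ?thesis using 1 a1 unfolding kset_def by auto
      next
        case 2
        have "x + y = (xd + yd + 1) * M" using xe ye 2 by (simp add: algebra_simps)
        then show ?thesis by (metis kset_mult(3))
      next
        case 3
        have "x + y = (xd + yd + 1) * M + (a + b - M)" using xe ye 3 by (simp add: algebra_simps)
        moreover have "K (a + b - M) \<le> K a + K b + 1" using kz a1 3 unfolding kunz_def by blast
        moreover have lt: "a + b - M < M" using ab by auto
        moreover have "((xd + yd + 1) * M + (a + b - M)) mod M = a + b - M"
          "((xd + yd + 1) * M + (a + b - M)) div M = xd + yd + 1"
          using dm_mod[OF lt] dm_div[OF lt] by blast+
        ultimately show ?thesis using 3 a1 unfolding kset_def by auto
      qed
    qed
  qed
  show "numerical_semigroup (kset M K)"
    unfolding numerical_semigroup_def using cl kset_mult kset_genus(2)[OF M] by blast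
qed

lemma kset_dec:
  assumes M: "1 \<le> M" and Kp: "\<forall>r\<in>{1..<M}. 1 \<le> K r" and r: "r \<in> {1..<M}"
  shows "(\<exists>s t. s \<in> kset M K - {0} \<and> t \<in> kset M K - {0} \<and> K r * M + r = s + t) \<longleftrightarrow> Dc M K r"
proof
  assume "\<exists>s t. s \<in> kset M K - {0} \<and> t \<in> kset M K - {0} \<and> K r * M + r = s + t"
  then obtain s t where s: "s \<in> kset M K" "s \<noteq> 0" and t: "t \<in> kset M K" "t \<noteq> 0"
    and st: "K r * M + r = s + t" by blast
  define j l sd td where "j = s mod M" "l = t mod M" "sd = s div M" "td = t div M"
  have se: "s = sd * M + j" and te: "t = td * M + l" unfolding j_l_sd_td_def by simp_all
  have jl: "j < M" "l < M" unfolding j_l_sd_td_def using M by auto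
  have rM: "r < M" using r by auto
  have j0: "j \<noteq> 0"
  proof
    assume "j = 0"
    then have "1 \<le> sd" using s se M by (cases sd) auto
    have e: "t = (K r - sd) * M + r"
    proof -
      have "sd * M \<le> K r * M"
      proof (rule ccontr)
        assume "\<not> sd * M \<le> K r * M"
        then have "Suc (K r) \<le> sd" by (meson mult_le_mono1 not_less_eq_eq)
        from mult_le_mono1[OF this, of M] have "K r * M + M \<le> sd * M" by simp
        then show False using st se \<open>j = 0\<close> rM by linarith
      qed
      then show ?thesis using st se \<open>j = 0\<close> by (simp add: diff_mult_distrib)
    qed
    then have "t mod M = r" "t div M = K r - sd" using dm_mod[OF rM] dm_div[OF rM] by auto
    moreover have "K r - sd < K r"
    proof -
      have "1 \<le> K r" using Kp r by blast
      then show ?thesis using \<open>1 \<le> sd\<close> by linarith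
    qed
    ultimately show False using t r unfolding kset_def by auto
  qed
  have l0: "l \<noteq> 0"
  proof
    assume "l = 0"
    then have "1 \<le> td" using t te M by (cases td) auto
    have e: "s = (K r - td) * M + r"
    proof -
      have "td * M \<le> K r * M"
      proof (rule ccontr)
        assume "\<not> td * M \<le> K r * M"
        then have "Suc (K r) \<le> td" by (meson mult_le_mono1 not_less_eq_eq)
        from mult_le_mono1[OF this, of M] have "K r * M + M \<le> td * M" by simp
        then show False using st te \<open>l = 0\<close> rM by linarith
      qed
      then show ?thesis using st te \<open>l = 0\<close> by (simp add: diff_mult_distrib)
    qed
    then have "s mod M = r" "s div M = K r - td" using dm_mod[OF rM] dm_div[OF rM] by auto
    moreover have "K r - td < K r"
    proof -
      have "1 \<le> K r" using Kp r by blast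
      then show ?thesis using \<open>1 \<le> td\<close> by linarith
    qed
    ultimately show False using s r unfolding kset_def by auto
  qed
  have jr: "j \<in> {1..<M}" "l \<in> {1..<M}" using j0 l0 jl by auto
  have kj: "K j \<le> sd" "K l \<le> td" using s t j0 l0 unfolding kset_def j_l_sd_td_def by auto
  show "Dc M K r"
  proof (cases "j + l < M")
    case True
    have "K r * M + r = (sd + td) * M + (j + l)" using st se te by (simp add: algebra_simps)
    then have "K r = sd + td" "r = j + l" using dm_uniq[of "K r" M r "sd + td" "j + l"] rM True by auto
    then show ?thesis unfolding Dc_def using jr kj by (intro bexI[of _ j] bexI[of _ l]) auto
  next
    case False
    have lt: "j + l - M < M" using jl by auto
    have "K r * M + r = (sd + td + 1) * M + (j + l - M)" using st se te False by (simp add: algebra_simps)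
    then have "K r = sd + td + 1" "r = j + l - M" using dm_uniq[of "K r" M r "sd + td + 1" "j + l - M"] rM lt by auto
    then show ?thesis unfolding Dc_def using jr kj False by (intro bexI[of _ j] bexI[of _ l]) auto
  qed
next
  assume "Dc M K r"
  then obtain j l where jl: "j\<in>{1..<M}" "l\<in>{1..<M}" and
    c: "(j + l = r \<and> K j + K l \<le> K r) \<or> (j + l = M + r \<and> K j + K l + 1 \<le> K r)"
    unfolding Dc_def by blast
  have sj: "K j * M + j \<in> kset M K - {0}" using w_in[of j M K "K j"] jl by auto
  from c show "\<exists>s t. s \<in> kset M K - {0} \<and> t \<in> kset M K - {0} \<and> K r * M + r = s + t"
  proof
    assume c1: "j + l = r \<and> K j + K l \<le> K r"
    have "(K r - K j) * M + l \<in> kset M K - {0}" using w_in[of l M K "K r - K j"] jl c1 by auto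
    moreover have "K r * M + r = (K j * M + j) + ((K r - K j) * M + l)"
    proof -
      have "K r = (K r - K j) + K j" using c1 by auto
      then have "K r * M + r = (K r - K j) * M + K j * M + r" by (metis add_mult_distrib)
      then show ?thesis using c1 by simp
    qed
    ultimately show ?thesis using sj by blast
  next
    assume c2: "j + l = M + r \<and> K j + K l + 1 \<le> K r"
    have "(K r - K j - 1) * M + l \<in> kset M K - {0}" using w_in[of l M K "K r - K j - 1"] jl c2 by auto
    moreover have "K r * M + r = (K j * M + j) + ((K r - K j - 1) * M + l)"
    proof -
      have "K r = (K r - K j - 1) + K j + 1" using c2 by auto
      then have "K r * M + r = (K r - K j - 1) * M + K j * M + M + r" by (metis add_mult_distrib mult_1)
      then show ?thesis using c2 by simp
    qed
    ultimately show ?thesis using sj by blast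
  qed
qed

lemma kset_mingen:
  assumes M: "1 \<le> M" and Kp: "\<forall>r\<in>{1..<M}. 1 \<le> K r"
  shows "min_generators (kset M K) = insert M ((\<lambda>r. K r * M + r) ` {r\<in>{1..<M}. \<not> Dc M K r})"
proof (intro set_eqI iffI)
  fix x assume x: "x \<in> min_generators (kset M K)"
  have xx: "x \<in> kset M K - {0} \<and> x \<notin> {a + b | a b. a \<in> kset M K - {0} \<and> b \<in> kset M K - {0}}"
    using x unfolding min_generators_def by blast
  then have xs: "x \<in> kset M K" "x \<noteq> 0" by auto
  have nd: "\<not> (\<exists>s t. s \<in> kset M K - {0} \<and> t \<in> kset M K - {0} \<and> x = s + t)"
    using xx by blast
  have xM: "M \<le> x" using kset_ge[OF M Kp xs] .
  have xmM: "x - M \<notin> kset M K - {0}"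
  proof
    assume "x - M \<in> kset M K - {0}"
    moreover have "M \<in> kset M K - {0}" using kset_mult M by auto
    moreover have "x = M + (x - M)" using xM by simp
    ultimately show False using nd by blast
  qed
  show "x \<in> insert M ((\<lambda>r. K r * M + r) ` {r\<in>{1..<M}. \<not> Dc M K r})"
  proof (cases "x mod M = 0")
    case True
    have "M dvd x" using True by auto
    then have "M dvd (x - M)" by (simp add: dvd_diff_nat)
    then have "x - M \<in> kset M K" unfolding kset_def by auto
    then have "x = M" using xmM xM by auto
    then show ?thesis by simp
  next
    case False
    define r where "r = x mod M"
    have r: "r \<in> {1..<M}" using False M unfolding r_def by auto
    have kr: "K r \<le> x div M" using xs False unfolding kset_def r_def by auto
    have xe: "x = x div M * M + r" unfolding r_def by simp
    have "x div M = K r"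
    proof (rule ccontr)
      assume "x div M \<noteq> K r"
      then have "K r \<le> x div M - 1" using kr by auto
      moreover have "x - M = (x div M - 1) * M + r"
      proof -
        have "1 \<le> K r" using Kp r by blast
        then obtain d where d: "x div M = Suc d" using kr by (cases "x div M") auto
        show ?thesis using xe d by simp
      qed
      ultimately have "x - M \<in> kset M K" using w_in[of r M K] r by auto
      moreover have "x - M \<noteq> 0" using \<open>x - M = (x div M - 1) * M + r\<close> r by auto
      ultimately show False using xmM by simp
    qed
    then have "x = K r * M + r" using xe by simp
    moreover have "\<not> Dc M K r" using kset_dec[OF M Kp r] nd calculation by auto
    ultimately show ?thesis using r by blast
  qed
next
  fix x assume "x \<in> insert M ((\<lambda>r. K r * M + r) ` {r\<in>{1..<M}. \<not> Dc M K r})"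
  then consider "x = M" | r where "r \<in> {1..<M}" "\<not> Dc M K r" "x = K r * M + r" by auto
  then show "x \<in> min_generators (kset M K)"
  proof cases
    case 1
    have "\<not> (s \<in> kset M K - {0} \<and> t \<in> kset M K - {0} \<and> M = s + t)" for s t
      using kset_ge[OF M Kp, of s] kset_ge[OF M Kp, of t] M by auto
    then show ?thesis unfolding min_generators_def using 1 kset_mult M by auto
  next
    case 2
    have "x \<in> kset M K" "x \<noteq> 0" using w_in[of r M K "K r"] 2 by auto
    moreover have "\<not> (\<exists>s t. s \<in> kset M K - {0} \<and> t \<in> kset M K - {0} \<and> x = s + t)"
      using kset_dec[OF M Kp 2(1)] 2 by auto
    ultimately show ?thesis unfolding min_generators_def by blast
  qed
qed

lemma kset_edim:
  assumes M: "1 \<le> M" and Kp: "\<forall>r\<in>{1..<M}. 1 \<le> K r"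
  shows "embedding_dimension (kset M K) = M - card {r\<in>{1..<M}. Dc M K r}"
proof -
  have inj: "inj_on (\<lambda>r. K r * M + r) {r\<in>{1..<M}. \<not> Dc M K r}"
  proof (rule inj_onI)
    fix a b assume "a \<in> {r\<in>{1..<M}. \<not> Dc M K r}" "b \<in> {r\<in>{1..<M}. \<not> Dc M K r}" "K a * M + a = K b * M + b"
    then show "a = b" using dm_uniq[of "K a" M a "K b" b] by auto
  qed
  have nin: "M \<notin> (\<lambda>r. K r * M + r) ` {r\<in>{1..<M}. \<not> Dc M K r}"
  proof
    assume "M \<in> (\<lambda>r. K r * M + r) ` {r\<in>{1..<M}. \<not> Dc M K r}"
    then obtain r where "r \<in> {1..<M}" "M = K r * M + r" by auto
    then show False using dm_uniq[of 1 M 0 "K r" r] by auto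
  qed
  have "card {r\<in>{1..<M}. \<not> Dc M K r} + card {r\<in>{1..<M}. Dc M K r} = M - 1"
  proof -
    have "card ({r\<in>{1..<M}. \<not> Dc M K r} \<union> {r\<in>{1..<M}. Dc M K r}) = card {r\<in>{1..<M}. \<not> Dc M K r} + card {r\<in>{1..<M}. Dc M K r}"
      by (rule card_Un_disjoint) auto
    moreover have "{r\<in>{1..<M}. \<not> Dc M K r} \<union> {r\<in>{1..<M}. Dc M K r} = {1..<M}" by auto
    ultimately have "card {r\<in>{1..<M}. \<not> Dc M K r} + card {r\<in>{1..<M}. Dc M K r} = card {1..<M}" by simp
    then show ?thesis by simp
  qed
  then show ?thesis unfolding embedding_dimension_def kset_mingen[OF M Kp]
    using card_image[OF inj] nin M by simp
qed

definition kv :: "nat \<Rightarrow> nat set \<Rightarrow> nat \<Rightarrow> nat" where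
  "kv M S r = (LEAST x. x \<in> S \<and> x mod M = r) div M"

lemma kv_kset:
  assumes r: "r \<in> {1..<M}"
  shows "kv M (kset M K) r = K r"
proof -
  have rM: "r < M" using r by auto
  have "(LEAST x. x \<in> kset M K \<and> x mod M = r) = K r * M + r"
  proof (rule Least_equality)
    show "K r * M + r \<in> kset M K \<and> (K r * M + r) mod M = r" using w_in[OF rM] rM by auto
  next
    fix y assume y: "y \<in> kset M K \<and> y mod M = r"
    then have "K r \<le> y div M" using r unfolding kset_def by auto
    then have "K r * M + r \<le> y div M * M + y mod M" using y by simp
    then show "K r * M + r \<le> y" by simp
  qed
  then show ?thesis unfolding kv_def using rM by simp
qed

lemma sg_basic:
  assumes ns: "numerical_semigroup S"
  shows "1 \<le> multiplicity S" "multiplicity S \<in> S"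
    "\<And>x. x \<in> S \<Longrightarrow> x \<noteq> 0 \<Longrightarrow> multiplicity S \<le> x"
    "\<exists>N. \<forall>x\<ge>N. x \<in> S"
proof -
  have fin: "finite (UNIV - S)" using ns unfolding numerical_semigroup_def by blast
  then obtain N where N: "\<forall>x\<in>UNIV - S. x < N" using finite_nat_set_iff_bounded by blast
  then show "\<exists>N. \<forall>x\<ge>N. x \<in> S" by (meson DiffI UNIV_I not_le)
  have ex: "N + 1 \<in> S \<and> N + 1 \<noteq> 0"
  proof -
    have "\<not> N + 1 < N" by simp
    then have "N + 1 \<in> S" using N by blast
    then show ?thesis by simp
  qed
  have "multiplicity S \<in> S \<and> multiplicity S \<noteq> 0"
    unfolding multiplicity_def by (rule LeastI[of _ "N+1"]) (rule ex)
  then show "1 \<le> multiplicity S" "multiplicity S \<in> S" by auto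
  show "\<And>x. x \<in> S \<Longrightarrow> x \<noteq> 0 \<Longrightarrow> multiplicity S \<le> x"
    unfolding multiplicity_def by (rule Least_le) simp
qed

lemma sg_kset:
  assumes ns: "numerical_semigroup S" and M: "M = multiplicity S"
  shows "\<forall>r\<in>{1..<M}. 1 \<le> kv M S r" "S = kset M (kv M S)"
proof -
  have cl: "\<And>x y. x \<in> S \<Longrightarrow> y \<in> S \<Longrightarrow> x + y \<in> S" and z: "0 \<in> S"
    using ns unfolding numerical_semigroup_def by blast+
  have M1: "1 \<le> M" and MS: "M \<in> S" and Mle: "\<And>x. x \<in> S \<Longrightarrow> x \<noteq> 0 \<Longrightarrow> M \<le> x"
    using sg_basic[OF ns] M by auto
  obtain N where N: "\<forall>x\<ge>N. x \<in> S" using sg_basic(4)[OF ns] by blast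
  have mult: "w + q * M \<in> S" if "w \<in> S" for w q
  proof (induction q)
    case 0 then show ?case using that by simp
  next
    case (Suc q)
    have "w + Suc q * M = (w + q * M) + M" by simp
    then show ?case using cl[OF Suc MS] by (simp only:)
  qed
  define w where "w r = (LEAST x. x \<in> S \<and> x mod M = r)" for r
  have wprop: "w r \<in> S \<and> w r mod M = r" if r: "r < M" for r
  proof -
    have "N \<le> N * M" using M1 by simp
    then have "N \<le> N * M + r" by linarith
    then have "N * M + r \<in> S" using N by blast
    moreover have "(N * M + r) mod M = r" using r by simp
    ultimately show ?thesis unfolding w_def by (metis (mono_tags, lifting) LeastI)
  qed
  have wle: "w r \<le> x" if "x \<in> S" "x mod M = r" for x r
    unfolding w_def by (rule Least_le) (use that in simp)
  have kvw: "kv M S r = w r div M" for r unfolding kv_def w_def by simp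
  show kp: "\<forall>r\<in>{1..<M}. 1 \<le> kv M S r"
  proof
    fix r assume r: "r \<in> {1..<M}"
    then have wr: "w r \<in> S" "w r mod M = r" "r \<noteq> 0" using wprop[of r] by auto
    then have "w r \<in> S" "w r \<noteq> 0" by (metis mod_0)+
    then have "M \<le> w r" using Mle by blast
    then show "1 \<le> kv M S r" unfolding kvw using M1
      by (metis div_le_mono div_self not_one_le_zero le_trans nat_le_linear one_le_mult_iff zero_less_one div_mult_self1_is_m)
  qed
  show "S = kset M (kv M S)"
  proof (intro set_eqI iffI)
    fix x assume x: "x \<in> S"
    show "x \<in> kset M (kv M S)"
    proof (cases "x mod M = 0")
      case True then show ?thesis unfolding kset_def by simp
    next
      case False
      have "w (x mod M) \<le> x" using wle[OF x refl] .
      then have "kv M S (x mod M) \<le> x div M" unfolding kvw by (rule div_le_mono)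
      then show ?thesis unfolding kset_def by simp
    qed
  next
    fix x assume x: "x \<in> kset M (kv M S)"
    show "x \<in> S"
    proof (cases "x mod M = 0")
      case True
      then have "x = 0 + (x div M) * M" by (metis add_0 add_0_right div_mult_mod_eq)
      then show ?thesis using mult[OF z, of "x div M"] by simp
    next
      case False
      define r where "r = x mod M"
      have rM: "r < M" using M1 unfolding r_def by simp
      have le: "w r div M \<le> x div M" using x False unfolding kset_def kvw r_def by simp
      have we: "w r = (w r div M) * M + r" using wprop[OF rM] by (metis div_mult_mod_eq)
      have xe: "x = (x div M) * M + r" unfolding r_def by simp
      have "x div M = (x div M - w r div M) + w r div M" using le by simp
      then have "(x div M) * M = (x div M - w r div M) * M + (w r div M) * M" by (metis add_mult_distrib)
      then have "x = w r + (x div M - w r div M) * M" using xe we by linarith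
      then show ?thesis using mult wprop[OF rM] by metis
    qed
  qed
qed

lemma sum_if_card:
  assumes "finite A"
  shows "(\<Sum>i\<in>A. if P i then (c::nat) else 0) = c * card {i\<in>A. P i}"
proof -
  have "(\<Sum>i\<in>A. if P i then c else 0) = (\<Sum>i\<in>{i\<in>A. P i}. c)"
    using sum.inter_filter[OF assms, of "\<lambda>_. c" P] by simp
  then show ?thesis by simp
qed

context kz
begin

lemma good_iff:
  assumes mM: "m = int M" and k1n: "k1 = int n - 1" and M1: "1 \<le> M"
  shows "good_seq k1 k2 m (map K [1..<M]) \<longleftrightarrow> int (card {r\<in>{1..<M}. Dc M K r}) = k2 - k1"
proof -
  define xs where "xs = map K [1..<M]"
  define L where "L = 2 * n - 1"
  have LM: "L < M" using Mge M1 unfolding L_def by linarith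
  have natL: "nat (2 * k1 + 1) = L" unfolding k1n L_def by (cases n) auto
  have len: "length xs = M - 1" unfolding xs_def by simp
  have nth: "xs ! (i - 1) = K i" if "i \<in> {1..<M}" for i
    using that unfolding xs_def by (auto simp: nth_map)
  have lenset: "{1..length xs} = {1..<M}" using len M1 by auto
  define xb where "xb = take L xs"
  have lenb: "length xb = L" unfolding xb_def using len LM by simp
  have nthb: "xb ! (i - 1) = K i" if "i \<in> {1..L}" for i
    using that LM nth[of i] unfolding xb_def by auto
  have nthb': "xb ! (i - Suc 0) = K i" if "Suc 0 \<le> i" "i \<le> L" for i
    using nthb[of i] that by simp
  have Krange: "K i \<in> {1, 2, 3}" if "i \<in> {1..<M}" for i
    using Kpos[OF that] Kle3[OF that] by auto
  define A2 where "A2 = {i\<in>{1..L}. K i = 2}"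
  define B3 where "B3 = {i\<in>{1..L}. K i = 3}"
  define Q where "Q = {i\<in>{L<..<M}. K i = 2}"
  define C where "C = {i\<in>{1..L}. \<exists>j1\<in>{1..L}. \<exists>j2\<in>{1..L}. j1 + j2 = i \<and> K j1 = 1 \<and> K j2 = 1 \<and> K i = 2}"
  have ca: "cnt_a xb = card A2" unfolding cnt_a_def A2_def lenb
    by (rule arg_cong[where f=card]) (auto simp: nthb')
  have cb: "cnt_b xb = card B3" unfolding cnt_b_def B3_def lenb
    by (rule arg_cong[where f=card]) (auto simp: nthb')
  have cc: "cnt_c xb = card C" unfolding cnt_c_def C_def lenb
    by (rule arg_cong[where f=card]) (auto simp: nthb'; metis add_leD1 add_leD2 atLeastAtMost_iff)
  have cq: "{i \<in> {1..length xs}. 2 * k1 + 2 \<le> int i \<and> int i \<le> m - 1 \<and> xs ! (i - 1) = 2} = Q"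
    unfolding lenset Q_def using nth mM k1n L_def by (auto; (cases n; force))
  have split: "{1..<M} = {1..L} \<union> {L<..<M}" using LM by auto
  have "n = sum y {1..L} + sum y {L<..<M}"
    using sumK unfolding split by (subst sum.union_disjoint[symmetric]) auto
  moreover have "sum y {1..L} = card A2 + 2 * card B3"
  proof -
    have "sum y {1..L} = (\<Sum>i\<in>{1..L}. (if K i = 2 then 1 else 0) + (if K i = 3 then 2 else 0))"
    proof (rule sum.cong)
      fix i assume "i \<in> {1..L}"
      then have "K i \<in> {1,2,3}" using Krange LM by auto
      then show "y i = (if K i = 2 then 1 else 0) + (if K i = 3 then 2 else 0)" by auto
    qed simp
    also have "\<dots> = card A2 + 2 * card B3"
      unfolding sum.distrib A2_def B3_def by (simp add: sum_if_card)
    finally show ?thesis .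
  qed
  moreover have "sum y {L<..<M} = card Q"
  proof -
    have "sum y {L<..<M} = (\<Sum>i\<in>{L<..<M}. if K i = 2 then 1 else 0)"
    proof (rule sum.cong)
      fix i assume i: "i \<in> {L<..<M}"
      then have i1: "i \<in> {1..<M}" by auto
      have "K i \<noteq> 3" using K3_small[OF i1] i unfolding L_def by auto
      then have "K i \<in> {1,2}" using Krange[OF i1] by auto
      then show "y i = (if K i = 2 then 1 else 0)" by auto
    qed simp
    also have "\<dots> = card Q" unfolding Q_def by (simp add: sum_if_card)
    finally show ?thesis .
  qed
  ultimately have nsum: "n = card A2 + 2 * card B3 + card Q" by simp
  have Deq: "{r\<in>{1..<M}. Dc M K r} = B3 \<union> (Q \<union> C)"
  proof (intro set_eqI iffI)
    fix r assume "r \<in> {r\<in>{1..<M}. Dc M K r}"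
    then have r: "r \<in> {1..<M}" and d: "Dc M K r" by auto
    consider "K r = 1" | "K r = 2" | "K r = 3" using Krange[OF r] by auto
    then show "r \<in> B3 \<union> (Q \<union> C)"
    proof cases
      case 1 then show ?thesis using D1[OF r] d by simp
    next
      case 2
      show ?thesis
      proof (cases "L < r")
        case True then show ?thesis using 2 r unfolding Q_def by auto
      next
        case False
        obtain j l where jl: "j\<in>{1..<M}" "l\<in>{1..<M}" "j + l = r" "K j = 1" "K l = 1"
          using D2_iff[OF r 2] d by blast
        have "j \<in> {1..L}" "l \<in> {1..L}" "r \<in> {1..L}" using jl False r by auto
        then have "r \<in> C" unfolding C_def using jl 2 by blast
        then show ?thesis by simp
      qed
    next
      case 3
      then have "r \<le> L" using K3_small[OF r] unfolding L_def by auto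
      then show ?thesis using 3 r unfolding B3_def by auto
    qed
  next
    fix r assume "r \<in> B3 \<union> (Q \<union> C)"
    then consider "r \<in> B3" | "r \<in> Q" | "r \<in> C" by blast
    then show "r \<in> {r\<in>{1..<M}. Dc M K r}"
    proof cases
      case 1
      then have r: "r \<in> {1..<M}" "K r = 3" using LM unfolding B3_def by auto
      then show ?thesis using K3_D by auto
    next
      case 2
      then have r: "r \<in> {1..<M}" "K r = 2" "2 * n \<le> r" using LM unfolding Q_def L_def by auto
      obtain j where j: "j\<in>{1..<r}" "K j = 1" "K (r - j) = 1" using K2_big[OF r] by blast
      have "\<exists>j\<in>{1..<M}. \<exists>l\<in>{1..<M}. j + l = r \<and> K j = 1 \<and> K l = 1"
        using j r by (intro bexI[of _ j] bexI[of _ "r - j"]) auto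
      then show ?thesis using D2_iff[OF r(1,2)] r by auto
    next
      case 3
      then obtain j1 j2 where r: "r \<in> {1..L}" "K r = 2" and j: "j1\<in>{1..L}" "j2\<in>{1..L}" "j1 + j2 = r"
        "K j1 = 1" "K j2 = 1" unfolding C_def by blast
      have r1: "r \<in> {1..<M}" using r LM by auto
      have "\<exists>j\<in>{1..<M}. \<exists>l\<in>{1..<M}. j + l = r \<and> K j = 1 \<and> K l = 1"
        using j LM by (intro bexI[of _ j1] bexI[of _ j2]) auto
      then show ?thesis using D2_iff[OF r1 r(2)] r1 by auto
    qed
  qed
  have dcard: "card {r\<in>{1..<M}. Dc M K r} = card B3 + card Q + card C"
  proof -
    have f: "finite B3" "finite Q" "finite C" unfolding B3_def Q_def C_def by auto
    have "card (Q \<union> C) = card Q + card C"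
      by (rule card_Un_disjoint) (use f in \<open>auto simp: Q_def C_def\<close>)
    moreover have "card (B3 \<union> (Q \<union> C)) = card B3 + card (Q \<union> C)"
      by (rule card_Un_disjoint) (use f in \<open>auto simp: B3_def Q_def C_def\<close>)
    ultimately show ?thesis unfolding Deq by simp
  qed
  have c1: "\<forall>i\<in>{1..length xs}. xs ! (i - 1) \<in> {1, 2, 3}"
    unfolding lenset using nth Krange by auto
  have c2: "\<forall>i\<in>{1..length xs}. int i \<ge> 2 * k1 \<longrightarrow> xs ! (i - 1) \<in> {1, 2}"
  proof
    fix i assume i: "i \<in> {1..length xs}"
    then have i1: "i \<in> {1..<M}" using lenset by auto
    show "int i \<ge> 2 * k1 \<longrightarrow> xs ! (i - 1) \<in> {1, 2}"
    proof
      assume "int i \<ge> 2 * k1"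
      then have "K i \<noteq> 3" using K3_small[OF i1] k1n by auto
      then show "xs ! (i - 1) \<in> {1, 2}" using Krange[OF i1] nth[OF i1] by auto
    qed
  qed
  have c3: "\<forall>i1\<in>{1..length xs}. \<forall>i2\<in>{1..length xs}. \<forall>i3\<in>{1..length xs}.
        int i1 \<le> 2 * k1 + 1 \<and> int i2 \<le> 2 * k1 + 1 \<and> int i3 \<le> 2 * k1 + 1 \<and> i1 + i2 = i3
        \<longrightarrow> (xs ! (i1 - 1), xs ! (i2 - 1), xs ! (i3 - 1)) \<noteq> (1, 1, 3)"
  proof (intro ballI impI)
    fix i1 i2 i3 assume i: "i1 \<in> {1..length xs}" "i2 \<in> {1..length xs}" "i3 \<in> {1..length xs}"
      and h: "int i1 \<le> 2 * k1 + 1 \<and> int i2 \<le> 2 * k1 + 1 \<and> int i3 \<le> 2 * k1 + 1 \<and> i1 + i2 = i3"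
    have ii: "i1 \<in> {1..<M}" "i2 \<in> {1..<M}" "i3 \<in> {1..<M}" using i lenset by auto
    have "K i3 \<le> K i1 + K i2" using K1[OF ii(1,2)] h ii(3) by auto
    then show "(xs ! (i1 - 1), xs ! (i2 - 1), xs ! (i3 - 1)) \<noteq> (1, 1, 3)"
      using nth[OF ii(1)] nth[OF ii(2)] nth[OF ii(3)] by auto
  qed
  have c0: "int (length xs) = m - 1" using len mM M1 by simp
  have "good_seq k1 k2 m xs \<longleftrightarrow>
     (int (card Q) = k1 + 1 - int (card A2) - 2 * int (card B3) \<and>
      int (card A2) + int (card B3) - int (card C) = 2 * k1 + 1 - k2)"
    unfolding good_seq_def Let_def natL using c0 c1 c2 c3
    by (simp only: xb_def[symmetric] ca cb cc cq) simp
  also have "\<dots> \<longleftrightarrow> int (card {r\<in>{1..<M}. Dc M K r}) = k2 - k1"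
    unfolding dcard using nsum k1n by linarith
  finally show ?thesis unfolding xs_def .
qed

end

lemma good_kunz:
  assumes mM: "m = int M" and k1n: "k1 = int n - 1" and M1: "1 \<le> M" and Mge: "2 * n \<le> M"
    and g: "good_seq k1 k2 m (map K [1..<M])"
  shows "kunz M K" "(\<Sum>r\<in>{1..<M}. K r - 1) = n"
proof -
  define xs where "xs = map K [1..<M]"
  define L where "L = 2 * n - 1"
  have LM: "L < M" using Mge M1 unfolding L_def by linarith
  have natL: "nat (2 * k1 + 1) = L" unfolding k1n L_def by (cases n) auto
  have len: "length xs = M - 1" unfolding xs_def by simp
  have nth: "xs ! (i - 1) = K i" if "i \<in> {1..<M}" for i
    using that unfolding xs_def by (auto simp: nth_map)
  have lenset: "{1..length xs} = {1..<M}" using len M1 by auto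
  define xb where "xb = take L xs"
  have lenb: "length xb = L" unfolding xb_def using len LM by simp
  have nthb: "xb ! (i - 1) = K i" if "i \<in> {1..L}" for i
    using that LM nth[of i] unfolding xb_def by auto
  have nthb': "xb ! (i - Suc 0) = K i" if "Suc 0 \<le> i" "i \<le> L" for i
    using nthb[of i] that by simp
  have g': "(\<forall>i\<in>{1..length xs}. xs ! (i - 1) \<in> {1, 2, 3}) \<and>
     (\<forall>i\<in>{1..length xs}. int i \<ge> 2 * k1 \<longrightarrow> xs ! (i - 1) \<in> {1, 2}) \<and>
     (\<forall>i1\<in>{1..length xs}. \<forall>i2\<in>{1..length xs}. \<forall>i3\<in>{1..length xs}.
        int i1 \<le> 2 * k1 + 1 \<and> int i2 \<le> 2 * k1 + 1 \<and> int i3 \<le> 2 * k1 + 1 \<and> i1 + i2 = i3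
        \<longrightarrow> (xs ! (i1 - 1), xs ! (i2 - 1), xs ! (i3 - 1)) \<noteq> (1, 1, 3)) \<and>
     int (card {i \<in> {1..length xs}. 2 * k1 + 2 \<le> int i \<and> int i \<le> m - 1 \<and> xs ! (i - 1) = 2})
          = k1 + 1 - int (cnt_a xb) - 2 * int (cnt_b xb)"
    using g unfolding good_seq_def Let_def natL xs_def[symmetric] xb_def[symmetric] by blast
  have c1: "\<forall>i\<in>{1..length xs}. xs ! (i - 1) \<in> {1, 2, 3}" using g' by blast
  have c2: "\<forall>i\<in>{1..length xs}. int i \<ge> 2 * k1 \<longrightarrow> xs ! (i - 1) \<in> {1, 2}" using g' by blast
  have Krange: "K i \<in> {1, 2, 3}" if "i \<in> {1..<M}" for i
  proof -
    have "xs ! (i - 1) \<in> {1, 2, 3}" using c1 that lenset by blast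
    then show ?thesis using nth[OF that] by simp
  qed
  have K3: "K i = 3 \<Longrightarrow> int i < 2 * k1" if "i \<in> {1..<M}" for i
  proof (rule ccontr)
    assume "K i = 3" "\<not> int i < 2 * k1"
    then have "xs ! (i - 1) \<in> {1, 2}" using c2 that lenset by auto
    then show False using nth[OF that] \<open>K i = 3\<close> by simp
  qed
  have k1c: "K (i + j) \<le> K i + K j" if "i \<in> {1..<M}" "j \<in> {1..<M}" "i + j < M" for i j
  proof (cases "K (i + j) = 3")
    case True
    have ij: "i + j \<in> {1..<M}" using that by auto
    have "int (i + j) < 2 * k1" using K3[OF ij True] .
    have c3: "\<forall>i1\<in>{1..length xs}. \<forall>i2\<in>{1..length xs}. \<forall>i3\<in>{1..length xs}.
        int i1 \<le> 2 * k1 + 1 \<and> int i2 \<le> 2 * k1 + 1 \<and> int i3 \<le> 2 * k1 + 1 \<and> i1 + i2 = i3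
        \<longrightarrow> (xs ! (i1 - 1), xs ! (i2 - 1), xs ! (i3 - 1)) \<noteq> (1, 1, 3)" using g' by blast
    have mem: "i \<in> {1..length xs}" "j \<in> {1..length xs}" "i + j \<in> {1..length xs}" using that ij lenset by auto
    have "int i \<le> 2 * k1 + 1 \<and> int j \<le> 2 * k1 + 1 \<and> int (i + j) \<le> 2 * k1 + 1 \<and> i + j = i + j"
      using \<open>int (i + j) < 2 * k1\<close> by auto
    then have "(xs ! (i - 1), xs ! (j - 1), xs ! (i + j - 1)) \<noteq> (1, 1, 3)"
      using c3 mem by blast
    then have "\<not> (K i = 1 \<and> K j = 1)" using nth[OF that(1)] nth[OF that(2)] nth[OF ij] True by auto
    moreover have "K i \<in> {1,2,3}" "K j \<in> {1,2,3}" using Krange that by auto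
    ultimately show ?thesis using True by auto
  next
    case False
    have ij: "i + j \<in> {1..<M}" using that by auto
    have "K i \<in> {1,2,3}" "K j \<in> {1,2,3}" "K (i + j) \<in> {1,2,3}" using Krange that ij by auto
    then show ?thesis using False by auto
  qed
  have k2c: "K (i + j - M) \<le> K i + K j + 1" if "i \<in> {1..<M}" "j \<in> {1..<M}" "M < i + j" for i j
  proof -
    have ij: "i + j - M \<in> {1..<M}" using that by auto
    have "K i \<in> {1,2,3}" "K j \<in> {1,2,3}" "K (i + j - M) \<in> {1,2,3}" using Krange that ij by auto
    then show ?thesis by auto
  qed
  show "kunz M K" unfolding kunz_def using Krange k1c k2c by fastforce
  define A2 where "A2 = {i\<in>{1..L}. K i = 2}"
  define B3 where "B3 = {i\<in>{1..L}. K i = 3}"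
  define Q where "Q = {i\<in>{L<..<M}. K i = 2}"
  have ca: "cnt_a xb = card A2" unfolding cnt_a_def A2_def lenb
    by (rule arg_cong[where f=card]) (auto simp: nthb')
  have cb: "cnt_b xb = card B3" unfolding cnt_b_def B3_def lenb
    by (rule arg_cong[where f=card]) (auto simp: nthb')
  have cq: "{i \<in> {1..length xs}. 2 * k1 + 2 \<le> int i \<and> int i \<le> m - 1 \<and> xs ! (i - 1) = 2} = Q"
    unfolding lenset Q_def using nth mM k1n L_def by (auto; (cases n; force))
  have split: "{1..<M} = {1..L} \<union> {L<..<M}" using LM by auto
  have "(\<Sum>r\<in>{1..<M}. K r - 1) = (\<Sum>r\<in>{1..L}. K r - 1) + (\<Sum>r\<in>{L<..<M}. K r - 1)"
    unfolding split by (subst sum.union_disjoint) auto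
  moreover have "(\<Sum>r\<in>{1..L}. K r - 1) = card A2 + 2 * card B3"
  proof -
    have "(\<Sum>r\<in>{1..L}. K r - 1) = (\<Sum>i\<in>{1..L}. (if K i = 2 then 1 else 0) + (if K i = 3 then 2 else 0))"
    proof (rule sum.cong)
      fix i assume "i \<in> {1..L}"
      then have "K i \<in> {1,2,3}" using Krange LM by auto
      then show "K i - 1 = (if K i = 2 then 1 else 0) + (if K i = 3 then 2 else 0)" by auto
    qed simp
    also have "\<dots> = card A2 + 2 * card B3"
      unfolding sum.distrib A2_def B3_def by (simp add: sum_if_card)
    finally show ?thesis .
  qed
  moreover have "(\<Sum>r\<in>{L<..<M}. K r - 1) = card Q"
  proof -
    have "(\<Sum>r\<in>{L<..<M}. K r - 1) = (\<Sum>i\<in>{L<..<M}. if K i = 2 then 1 else 0)"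
    proof (rule sum.cong)
      fix i assume i: "i \<in> {L<..<M}"
      then have i1: "i \<in> {1..<M}" by auto
      have "K i \<noteq> 3" using K3[OF i1] i k1n unfolding L_def by auto
      then have "K i \<in> {1,2}" using Krange[OF i1] by auto
      then show "K i - 1 = (if K i = 2 then 1 else 0)" by auto
    qed simp
    also have "\<dots> = card Q" unfolding Q_def by (simp add: sum_if_card)
    finally show ?thesis .
  qed
  moreover have "int (card Q) = k1 + 1 - int (card A2) - 2 * int (card B3)"
    using g' cq ca cb by simp
  ultimately show "(\<Sum>r\<in>{1..<M}. K r - 1) = n" using k1n by linarith
qed

lemma sumK_shift:
  fixes K :: "nat \<Rightarrow> nat"
  assumes Kp: "\<forall>r\<in>{1..<M}. 1 \<le> K r"
  shows "sum K {1..<M} = (\<Sum>r\<in>{1..<M}. K r - 1) + (M - 1)"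
proof -
  have "sum K {1..<M} = (\<Sum>r\<in>{1..<M}. (K r - 1) + 1)"
  proof (rule sum.cong)
    fix r assume "r \<in> {1..<M}"
    then have "1 \<le> K r" using Kp by blast
    then show "K r = K r - 1 + 1" by linarith
  qed simp
  also have "\<dots> = (\<Sum>r\<in>{1..<M}. K r - 1) + (\<Sum>r\<in>{1..<M}. 1)" by (rule sum.distrib)
  also have "\<dots> = (\<Sum>r\<in>{1..<M}. K r - 1) + (M - 1)" by simp
  finally show ?thesis .
qed

lemma charK:
  assumes M1: "1 \<le> M" and Kp: "\<forall>r\<in>{1..<M}. 1 \<le> K r" and mM: "m = int M"
    and k1n: "k1 = int n - 1" and Mge: "2 * n \<le> M"
  shows "(numerical_semigroup (kset M K) \<and> int (multiplicity (kset M K)) = m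
      \<and> int (genus (kset M K)) = m + k1
      \<and> int (embedding_dimension (kset M K)) = int (genus (kset M K)) - k2)
    \<longleftrightarrow> good_seq k1 k2 m (map K [1..<M])"
proof -
  have mu: "multiplicity (kset M K) = M" by (rule kset_multiplicity[OF M1 Kp])
  have ge: "genus (kset M K) = sum K {1..<M}" by (rule kset_genus(1)[OF M1])
  have ed: "embedding_dimension (kset M K) = M - card {r\<in>{1..<M}. Dc M K r}" by (rule kset_edim[OF M1 Kp])
  have ns: "numerical_semigroup (kset M K) \<longleftrightarrow> kunz M K" by (rule kset_semigroup_iff[OF M1 Kp])
  have sh: "sum K {1..<M} = (\<Sum>r\<in>{1..<M}. K r - 1) + (M - 1)" by (rule sumK_shift[OF Kp])
  have cle: "card {r\<in>{1..<M}. Dc M K r} \<le> M - 1"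
  proof -
    have "card {r\<in>{1..<M}. Dc M K r} \<le> card {1..<M}" by (rule card_mono) auto
    then show ?thesis by simp
  qed
  show ?thesis
  proof
    assume h: "numerical_semigroup (kset M K) \<and> int (multiplicity (kset M K)) = m
      \<and> int (genus (kset M K)) = m + k1
      \<and> int (embedding_dimension (kset M K)) = int (genus (kset M K)) - k2"
    have kzK: "kunz M K" using h ns by blast
    have s: "(\<Sum>r\<in>{1..<M}. K r - 1) = n" using h ge sh mM k1n M1 by linarith
    interpret kz M n K by unfold_locales (use kzK s Mge in auto)
    have "int (card {r\<in>{1..<M}. Dc M K r}) = k2 - k1" using h ge sh ed mM k1n M1 cle s by linarith
    then show "good_seq k1 k2 m (map K [1..<M])" using good_iff[OF mM k1n M1] by blast
  next
    assume g: "good_seq k1 k2 m (map K [1..<M])"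
    have kzK: "kunz M K" and s: "(\<Sum>r\<in>{1..<M}. K r - 1) = n"
      using good_kunz[OF mM k1n M1 Mge g] by auto
    interpret kz M n K by unfold_locales (use kzK s Mge in auto)
    have "int (card {r\<in>{1..<M}. Dc M K r}) = k2 - k1" using good_iff[OF mM k1n M1] g by blast
    then show "numerical_semigroup (kset M K) \<and> int (multiplicity (kset M K)) = m
      \<and> int (genus (kset M K)) = m + k1
      \<and> int (embedding_dimension (kset M K)) = int (genus (kset M K)) - k2"
      using ns kzK mu ge sh ed mM k1n M1 cle s by simp
  qed
qed

theorem theorem8p5:
  fixes k1 k2 m :: int
  assumes "-1 \<le> k1" and "k1 \<le> k2" and "m \<ge> 2 * k1 + 2"
  shows "\<exists>f. bij_betw f
           {S. numerical_semigroup S \<and> int (multiplicity S) = m \<and> int (genus S) = m + k1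
               \<and> int (embedding_dimension S) = int (genus S) - k2}
           {xs. good_seq k1 k2 m xs}"
proof -
  define A where "A = {S. numerical_semigroup S \<and> int (multiplicity S) = m \<and> int (genus S) = m + k1
               \<and> int (embedding_dimension S) = int (genus S) - k2}"
  define B where "B = {xs. good_seq k1 k2 m xs}"
  define M where "M = nat m"
  define n where "n = nat (k1 + 1)"
  have mM: "m = int M" unfolding M_def using assms by simp
  have k1n: "k1 = int n - 1" unfolding n_def using assms by simp
  have Mge: "2 * n \<le> M" unfolding M_def n_def using assms by linarith
  show ?thesis
  proof (cases "M = 0")
    case True
    have "A = {}"
    proof -
      have "1 \<le> multiplicity S" if "numerical_semigroup S" for S using sg_basic(1)[OF that] .
      then show ?thesis unfolding A_def using True mM by (metis (mono_tags, lifting) empty_Collect_eq not_one_le_zero of_nat_eq_0_iff)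
    qed
    moreover have "B = {}" unfolding B_def good_seq_def using True mM by auto
    ultimately show ?thesis unfolding A_def[symmetric] B_def[symmetric] by (auto simp: bij_betw_def)
  next
    case False
    then have M1: "1 \<le> M" by simp
    define f where "f S = map (kv M S) [1..<M]" for S
    have fA: "f S \<in> B" and rep: "S = kset M (kv M S)" if S: "S \<in> A" for S
    proof -
      have ns: "numerical_semigroup S" and mu: "multiplicity S = M" using S mM unfolding A_def by auto
      have Kp: "\<forall>r\<in>{1..<M}. 1 \<le> kv M S r" and Se: "S = kset M (kv M S)"
        using sg_kset[OF ns mu[symmetric]] by auto
      show "S = kset M (kv M S)" by (rule Se)
      have "kset M (kv M S) \<in> A" using S Se by simp
      then show "f S \<in> B" unfolding B_def f_def using charK[OF M1 Kp mM k1n Mge] unfolding A_def by simp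
    qed
    have inj: "inj_on f A"
    proof (rule inj_onI)
      fix S1 S2 assume s: "S1 \<in> A" "S2 \<in> A" "f S1 = f S2"
      then have "\<forall>r\<in>set [1..<M]. kv M S1 r = kv M S2 r" unfolding f_def by (simp add: map_eq_conv)
      then have "kset M (kv M S1) = kset M (kv M S2)" by (intro kset_cong[OF M1]) auto
      then show "S1 = S2" using rep[OF s(1)] rep[OF s(2)] by simp
    qed
    have surj: "B \<subseteq> f ` A"
    proof
      fix xs assume xs: "xs \<in> B"
      then have g: "good_seq k1 k2 m xs" unfolding B_def by simp
      then have len: "length xs = M - 1" unfolding good_seq_def using mM by auto
      define K where "K r = xs ! (r - 1)" for r
      have xe: "map K [1..<M] = xs" by (rule nth_equalityI) (auto simp: len K_def)
      have c1: "\<forall>i\<in>{1..length xs}. xs ! (i - 1) \<in> {1, 2, 3}" using g unfolding good_seq_def by blast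
      have Kp: "\<forall>r\<in>{1..<M}. 1 \<le> K r"
      proof
        fix r assume r: "r \<in> {1..<M}"
        then have "r \<in> {1..length xs}" using len by auto
        then have "xs ! (r - 1) \<in> {1, 2, 3}" using c1 by blast
        then show "1 \<le> K r" unfolding K_def by auto
      qed
      have "kset M K \<in> A" unfolding A_def using charK[OF M1 Kp mM k1n Mge] g xe by simp
      moreover have "f (kset M K) = xs"
      proof -
        have "f (kset M K) = map K [1..<M]" unfolding f_def by (rule map_cong) (auto simp: kv_kset)
        then show ?thesis using xe by simp
      qed
      ultimately show "xs \<in> f ` A" by (metis imageI)
    qed
    have "bij_betw f A B" unfolding bij_betw_def using inj surj fA by blast
    then show ?thesis unfolding A_def B_def by blast
  qed
qed


end
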